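(* Let $\varphi\in\mathrm{End}_K(P_n)$. Then the following are equivalent: (1) $\varphi\in\mathbb{S}_n$; (2) $[x_i,\varphi]\in\mathfrak{p}_i$ for all $i=1,\dots,n$; (3) for each $i=1,\dots,n$ there exist $a_i,b_i\in\mathfrak{p}_i$ with $x_i\varphi=\varphi(x_i+a_i)+b_i$.
   Context: $K$ is a field of characteristic zero. $\mathbb{S}_n$ is the $K$-algebra generated by $x_1,\dots,x_n,y_1,\dots,y_n$ with defining relations $y_ix_i=1$ and $[x_i,y_j]=[x_i,x_j]=[y_i,y_j]=0$ for $i\ne j$. $\mathbb{S}_n$ acts faithfully on $P_n=K[x_1,\dots,x_n]$ by $x_i*x^\alpha=x^{\alpha+e_i}$, $y_i*x^\alpha=x^{\alpha-e_i}$ if $\alpha_i>0$ and $0$ otherwise; thus $\mathbb{S}_n\subset\mathrm{End}_K(P_n)$ and all products/commutators are taken in $\mathrm{End}_K(P_n)$. For $k,l\in\mathbb{N}$, $E_{kl}(i):=x_i^ky_i^l-x_i^{k+1}y_i^{l+1}$, $F(i)=\bigoplus_{k,l}KE_{kl}(i)$, and $\mathfrak{p}_i:=F(i)\otimes\bigotimes_{j\ne i}\mathbb{S}_1(j)\subset\mathbb{S}_n=\bigotimes_j\mathbb{S}_1(j)$ (the ideal generated by $1-x_iy_i$). *)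

theory Defs
  imports "HOL-Library.Poly_Mapping"
begin

text \<open>P_n = K[x_i : i in 'i] as finitely supported maps from exponent vectors
  ('i =>0 nat) to the field 'k.  The index type 'i is finite (n = CARD('i)).\<close>

type_synonym ('i, 'k) pol = "('i \<Rightarrow>\<^sub>0 nat) \<Rightarrow>\<^sub>0 'k"

type_synonym ('i, 'k) endo = "('i, 'k) pol \<Rightarrow> ('i, 'k) pol"

definition smult_pol :: "'k::field \<Rightarrow> ('i, 'k) pol \<Rightarrow> ('i, 'k) pol" where
  "smult_pol c p = Poly_Mapping.map (\<lambda>a. c * a) p"

definition klinear :: "('i, 'k::field) endo \<Rightarrow> bool" where
  "klinear \<phi> \<longleftrightarrow> (\<forall>p q. \<phi> (p + q) = \<phi> p + \<phi> q) \<and> (\<forall>c p. \<phi> (smult_pol c p) = smult_pol c (\<phi> p))"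

text \<open>The operators x_i (multiplication by x_i) and y_i (x^a |-> x^(a-e_i) if a_i>0, else 0).\<close>
definition xop :: "'i \<Rightarrow> ('i, 'k::field) endo" where
  "xop i p = Poly_Mapping.single (Poly_Mapping.single i 1) 1 * p"

definition yop :: "'i \<Rightarrow> ('i, 'k::field) endo" where
  "yop i p = Poly_Mapping.map_key (\<lambda>\<alpha>. \<alpha> + Poly_Mapping.single i (1::nat)) p"

definition eadd :: "('i, 'k::field) endo \<Rightarrow> ('i, 'k) endo \<Rightarrow> ('i, 'k) endo" where
  "eadd f g = (\<lambda>p. f p + g p)"

definition esub :: "('i, 'k::field) endo \<Rightarrow> ('i, 'k) endo \<Rightarrow> ('i, 'k) endo" where
  "esub f g = (\<lambda>p. f p - g p)"

definition escal :: "'k::field \<Rightarrow> ('i, 'k) endo \<Rightarrow> ('i, 'k) endo" where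
  "escal c f = (\<lambda>p. smult_pol c (f p))"

definition comm :: "('i, 'k::field) endo \<Rightarrow> ('i, 'k) endo \<Rightarrow> ('i, 'k) endo" where
  "comm f g = esub (f \<circ> g) (g \<circ> f)"

text \<open>For J = UNIV this is S_n; for J = {j} it is S_1(j); for J = UNIV - {i} it is
  the tensor product of the S_1(j), j ~= i, inside End_K(P_n).\<close>
inductive_set alg_gen :: "'i set \<Rightarrow> ('i, 'k::field) endo set" for J where
  gen_x: "j \<in> J \<Longrightarrow> xop j \<in> alg_gen J"
| gen_y: "j \<in> J \<Longrightarrow> yop j \<in> alg_gen J"
| gen_scal: "(\<lambda>p. smult_pol c p) \<in> alg_gen J"
| gen_add: "f \<in> alg_gen J \<Longrightarrow> g \<in> alg_gen J \<Longrightarrow> eadd f g \<in> alg_gen J"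
| gen_comp: "f \<in> alg_gen J \<Longrightarrow> g \<in> alg_gen J \<Longrightarrow> f \<circ> g \<in> alg_gen J"

abbreviation Sn :: "('i, 'k::field) endo set" where
  "Sn \<equiv> alg_gen UNIV"

inductive_set espan :: "('i, 'k::field) endo set \<Rightarrow> ('i, 'k) endo set" for A where
  span_zero: "(\<lambda>p. 0) \<in> espan A"
| span_base: "f \<in> A \<Longrightarrow> f \<in> espan A"
| span_add: "f \<in> espan A \<Longrightarrow> g \<in> espan A \<Longrightarrow> eadd f g \<in> espan A"
| span_scal: "f \<in> espan A \<Longrightarrow> escal c f \<in> espan A"

definition Ekl :: "nat \<Rightarrow> nat \<Rightarrow> 'i \<Rightarrow> ('i, 'k::field) endo" where
  "Ekl k l i = esub (xop i ^^ k \<circ> yop i ^^ l) (xop i ^^ (k+1) \<circ> yop i ^^ (l+1))"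

text \<open>p_i = F(i) \<otimes> \<otimes>_{j ~= i} S_1(j), realised inside End_K(P_n) as the span of
  the products E_kl(i) u with u in the algebra generated by x_j, y_j (j ~= i).\<close>
definition pid :: "'i \<Rightarrow> ('i, 'k::field) endo set" where
  "pid i = espan {Ekl k l i \<circ> u | k l u. u \<in> alg_gen (UNIV - {i})}"

end

theory Submission
  imports Defs "HOL-Library.FuncSet"
begin


lemma lookup_minus_nat: "Poly_Mapping.lookup (a - b) k = Poly_Mapping.lookup a k - (Poly_Mapping.lookup b k :: nat)"
  by transfer simp

lemma smult_conv: "smult_pol c p = Poly_Mapping.single 0 c * p"
  unfolding smult_pol_def by (metis mult_map_scale_conv_mult)

lemma inj_shift: "inj (\<lambda>\<alpha>::'i \<Rightarrow>\<^sub>0 nat. \<alpha> + Poly_Mapping.single i 1)"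
  by (rule injI) simp

lemma lookup_yop: "Poly_Mapping.lookup (yop i p) \<beta> = Poly_Mapping.lookup p (\<beta> + Poly_Mapping.single i 1)"
  unfolding yop_def map_key.rep_eq[OF inj_shift] by simp

lemma yop_mono: "yop i (Poly_Mapping.single \<alpha> c) =
   (if Poly_Mapping.lookup \<alpha> i > 0 then Poly_Mapping.single (\<alpha> - Poly_Mapping.single i 1) c else 0)"
proof (rule poly_mapping_eqI)
  fix \<beta> :: "'a \<Rightarrow>\<^sub>0 nat"
  show "Poly_Mapping.lookup (yop i (Poly_Mapping.single \<alpha> c)) \<beta> = Poly_Mapping.lookup (if Poly_Mapping.lookup \<alpha> i > 0 then Poly_Mapping.single (\<alpha> - Poly_Mapping.single i 1) c else 0) \<beta>"
  proof (cases "Poly_Mapping.lookup \<alpha> i > 0")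
    case True
    have "(\<alpha> = \<beta> + Poly_Mapping.single i 1) = (\<alpha> - Poly_Mapping.single i 1 = \<beta>)"
      using True by (auto simp: poly_mapping_eq_iff fun_eq_iff lookup_add lookup_minus_nat lookup_single when_def)
    then show ?thesis using True by (simp add: lookup_yop lookup_single)
  next
    case False
    have "\<alpha> \<noteq> \<beta> + Poly_Mapping.single i 1"
    proof
      assume "\<alpha> = \<beta> + Poly_Mapping.single i 1"
      hence "Poly_Mapping.lookup \<alpha> i > 0" by (simp add: lookup_add)
      with False show False by simp
    qed
    then show ?thesis using False by (simp add: lookup_yop lookup_single)
  qed
qed

lemma xop_mono: "xop i (Poly_Mapping.single \<alpha> c) = Poly_Mapping.single (\<alpha> + Poly_Mapping.single i 1) c"
  unfolding xop_def by (simp add: mult_single add.commute)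

lemma pol_expand: "p = (\<Sum>\<alpha>\<in>Poly_Mapping.keys p. Poly_Mapping.single \<alpha> (Poly_Mapping.lookup p \<alpha>))"
proof (rule poly_mapping_eqI)
  fix \<beta>
  have "(\<Sum>\<alpha>\<in>Poly_Mapping.keys p. Poly_Mapping.lookup (Poly_Mapping.single \<alpha> (Poly_Mapping.lookup p \<alpha>)) \<beta>) = (\<Sum>\<alpha>\<in>Poly_Mapping.keys p. if \<alpha> = \<beta> then Poly_Mapping.lookup p \<alpha> else 0)"
    by (rule sum.cong) (auto simp: lookup_single when_def)
  also have "\<dots> = Poly_Mapping.lookup p \<beta>" by (simp add: in_keys_iff)
  finally show "Poly_Mapping.lookup p \<beta> = Poly_Mapping.lookup (\<Sum>\<alpha>\<in>Poly_Mapping.keys p. Poly_Mapping.single \<alpha> (Poly_Mapping.lookup p \<alpha>)) \<beta>"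
    by (simp add: lookup_sum)
qed

lemma klinear_zero: "klinear f \<Longrightarrow> f 0 = 0"
  unfolding klinear_def by (metis add_cancel_right_right add_0)

lemma klinear_sum: "klinear f \<Longrightarrow> f (sum g A) = (\<Sum>a\<in>A. f (g a))"
  by (induction A rule: infinite_finite_induct) (auto simp: klinear_zero klinear_def)

lemma smult_single: "smult_pol c (Poly_Mapping.single \<alpha> d) = Poly_Mapping.single \<alpha> (c * d)"
  unfolding smult_pol_def by simp

lemma linear_ext:
  assumes "klinear f" "klinear g" "\<And>\<alpha>. f (Poly_Mapping.single \<alpha> 1) = g (Poly_Mapping.single \<alpha> 1)"
  shows "f = g"
proof
  fix p
  have s: "Poly_Mapping.single \<alpha> c = smult_pol c (Poly_Mapping.single \<alpha> 1)" for \<alpha> c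
    by (simp add: smult_single)
  have "f p = (\<Sum>\<alpha>\<in>Poly_Mapping.keys p. f (Poly_Mapping.single \<alpha> (Poly_Mapping.lookup p \<alpha>)))"
    by (subst pol_expand) (simp add: klinear_sum assms(1))
  also have "\<dots> = (\<Sum>\<alpha>\<in>Poly_Mapping.keys p. g (Poly_Mapping.single \<alpha> (Poly_Mapping.lookup p \<alpha>)))"
    using assms unfolding klinear_def by (metis s)
  also have "\<dots> = g p"
    by (subst (2) pol_expand) (simp add: klinear_sum assms(2))
  finally show "f p = g p" .
qed



abbreviation monom1 :: "('i \<Rightarrow>\<^sub>0 nat) \<Rightarrow> ('i,'k::field) pol" where
  "monom1 \<alpha> \<equiv> Poly_Mapping.single \<alpha> 1"

lemma klinearI: "(\<And>p q. f (p + q) = f p + f q) \<Longrightarrow> (\<And>c p. f (smult_pol c p) = smult_pol c (f p)) \<Longrightarrow> klinear f"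
  unfolding klinear_def by blast

lemma klinear_add: "klinear f \<Longrightarrow> f (p + q) = f p + f q"
  unfolding klinear_def by blast
lemma klinear_smult: "klinear f \<Longrightarrow> f (smult_pol c p) = smult_pol c (f p)"
  unfolding klinear_def by blast
lemma klinear_diff: "klinear f \<Longrightarrow> f (p - q) = f p - f q"
  by (metis add_diff_cancel klinear_add diff_add_cancel)

lemma klinear_xop: "klinear (xop i)"
  by (rule klinearI) (simp_all add: xop_def smult_conv distrib_left mult.left_commute)

lemma klinear_yop: "klinear (yop i)"
  by (rule klinearI) (unfold yop_def smult_pol_def, rule map_key_plus[OF inj_shift], rule map_key_map[OF inj_shift])

lemma klinear_scal: "klinear (\<lambda>p. smult_pol c p)"
  by (rule klinearI) (simp_all add: smult_conv distrib_left mult.left_commute)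

lemma klinear_comp: "klinear f \<Longrightarrow> klinear g \<Longrightarrow> klinear (f \<circ> g)"
  by (rule klinearI) (simp_all add: klinear_add klinear_smult)

lemma klinear_comp2: "klinear f \<Longrightarrow> klinear g \<Longrightarrow> klinear (\<lambda>x. f (g x))"
  using klinear_comp[unfolded comp_def] .

lemma smult_add2: "smult_pol c (p + q) = smult_pol c p + smult_pol c q"
  by (simp add: smult_conv distrib_left)
lemma smult_diff2: "smult_pol c (p - q) = smult_pol c p - smult_pol c q"
  by (simp add: smult_conv right_diff_distrib)
lemma smult_smult: "smult_pol c (smult_pol d p) = smult_pol d (smult_pol c p)"
  by (simp add: smult_conv mult.left_commute)
lemma smult_zero2: "smult_pol c 0 = 0"
  by (simp add: smult_conv)
lemma smult_one: "smult_pol 1 p = p"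
  by (simp add: smult_conv)

lemma klinear_eadd: "klinear f \<Longrightarrow> klinear g \<Longrightarrow> klinear (eadd f g)"
  by (rule klinearI) (simp_all add: eadd_def klinear_add klinear_smult smult_add2 add_ac)

lemma klinear_esub: "klinear f \<Longrightarrow> klinear g \<Longrightarrow> klinear (esub f g)"
  by (rule klinearI) (simp_all add: esub_def klinear_add klinear_smult smult_diff2 algebra_simps)

lemma klinear_escal: "klinear f \<Longrightarrow> klinear (escal c f)"
  by (rule klinearI) (simp_all add: escal_def klinear_add klinear_smult smult_add2 smult_smult)

lemma klinear_zerof: "klinear (\<lambda>p. 0)"
  by (rule klinearI) (simp_all add: smult_zero2)

lemma klinear_funpow: "klinear f \<Longrightarrow> klinear (f ^^ n)"
  by (induction n) (simp_all add: klinear_comp klinearI)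

lemma alg_gen_linear: "f \<in> alg_gen J \<Longrightarrow> klinear f"
  by (induction rule: alg_gen.induct) (simp_all add: klinear_xop klinear_yop klinear_scal klinear_eadd klinear_comp klinear_comp2)

lemma espan_linear: "f \<in> espan A \<Longrightarrow> (\<And>g. g \<in> A \<Longrightarrow> klinear g) \<Longrightarrow> klinear f"
  by (induction rule: espan.induct) (simp_all add: klinear_zerof klinear_eadd klinear_escal)

lemma Ekl_linear: "klinear (Ekl k l i)"
  unfolding Ekl_def by (intro klinear_esub klinear_comp klinear_funpow klinear_xop klinear_yop)

lemma pid_linear: "f \<in> pid i \<Longrightarrow> klinear f"
  unfolding pid_def by (erule espan_linear) (auto intro: klinear_comp Ekl_linear alg_gen_linear)

lemma xx_comm: "xop i \<circ> xop j = xop j \<circ> xop i"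
  by (rule ext) (simp add: xop_def mult.left_commute)

lemma yy_comm: "yop i \<circ> yop j = yop j \<circ> yop i"
  by (rule ext, rule poly_mapping_eqI) (simp add: lookup_yop add_ac)

lemma klinear_mono_ext:
  "klinear f \<Longrightarrow> klinear g \<Longrightarrow> (\<And>\<alpha>. f (monom1 \<alpha>) = g (monom1 \<alpha>)) \<Longrightarrow> f = g"
  by (rule linear_ext)

lemma xy_comm: "i \<noteq> j \<Longrightarrow> xop i \<circ> yop j = yop j \<circ> xop i"
proof (rule linear_ext)
  fix \<alpha> :: "'a \<Rightarrow>\<^sub>0 nat"
  assume ij: "i \<noteq> j"
  have e: "\<alpha> - Poly_Mapping.single j 1 + Poly_Mapping.single i 1 = \<alpha> + Poly_Mapping.single i 1 - Poly_Mapping.single j 1"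
    using ij by (auto simp: poly_mapping_eq_iff fun_eq_iff lookup_add lookup_minus_nat lookup_single when_def)
  show "(xop i \<circ> yop j) (Poly_Mapping.single \<alpha> (1::'b)) = (yop j \<circ> xop i) (Poly_Mapping.single \<alpha> 1)"
    using ij by (simp add: yop_mono xop_mono e[simplified] lookup_add lookup_single klinear_zero[OF klinear_xop])
qed (simp_all add: klinear_comp klinear_xop klinear_yop)

lemma yx_id: "yop i \<circ> xop i = id"
proof (rule linear_ext)
  fix \<alpha> :: "'a \<Rightarrow>\<^sub>0 nat"
  show "(yop i \<circ> xop i) (Poly_Mapping.single \<alpha> (1::'b)) = id (Poly_Mapping.single \<alpha> 1)"
    by (simp add: yop_mono xop_mono lookup_add)
qed (simp_all add: klinear_comp klinear_xop klinear_yop klinearI)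

lemma yx_id': "yop i (xop i p) = p"
  using yx_id by (metis comp_apply id_apply)

lemma scal_comm: "klinear f \<Longrightarrow> f \<circ> (\<lambda>p. smult_pol c p) = (\<lambda>p. smult_pol c p) \<circ> f"
  by (rule ext) (simp add: klinear_smult)

lemma eadd_comm_lemma: "klinear w \<Longrightarrow> w \<circ> f = f \<circ> w \<Longrightarrow> w \<circ> g = g \<circ> w \<Longrightarrow> w \<circ> eadd f g = eadd f g \<circ> w"
  unfolding fun_eq_iff comp_def eadd_def by (simp add: klinear_add)

lemma comp_comm_lemma: "w \<circ> f = f \<circ> w \<Longrightarrow> w \<circ> g = g \<circ> w \<Longrightarrow> w \<circ> (f \<circ> g) = (f \<circ> g) \<circ> w"
  by (metis comp_assoc)

lemma alg_gen_comm_x: "u \<in> alg_gen (UNIV - {i}) \<Longrightarrow> xop i \<circ> u = u \<circ> xop i"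
proof (induction rule: alg_gen.induct)
  case (gen_x j) then show ?case by (simp add: fun_eq_iff xop_def mult.left_commute)
next
  case (gen_y j) show ?case by (rule xy_comm) (use gen_y in auto)
next
  case (gen_scal c) show ?case by (rule scal_comm[OF klinear_xop])
next
  case (gen_add f g) show ?case by (rule eadd_comm_lemma[OF klinear_xop gen_add.IH])
next
  case (gen_comp f g) show ?case by (rule comp_comm_lemma[OF gen_comp.IH])
qed

lemma alg_gen_comm_y: "u \<in> alg_gen (UNIV - {i}) \<Longrightarrow> yop i \<circ> u = u \<circ> yop i"
proof (induction rule: alg_gen.induct)
  case (gen_x j) show ?case by (rule xy_comm[symmetric]) (use gen_x in auto)
next
  case (gen_y j) show ?case by (rule ext, rule poly_mapping_eqI) (simp add: lookup_yop add_ac)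
next
  case (gen_scal c) show ?case by (rule scal_comm[OF klinear_yop])
next
  case (gen_add f g) show ?case by (rule eadd_comm_lemma[OF klinear_yop gen_add.IH])
next
  case (gen_comp f g) show ?case by (rule comp_comm_lemma[OF gen_comp.IH])
qed

lemma funpow_comm: "w \<circ> f = f \<circ> w \<Longrightarrow> w \<circ> f ^^ n = f ^^ n \<circ> w"
  unfolding fun_eq_iff comp_def by (induction n) simp_all

lemma esub_comm_lemma: "klinear w \<Longrightarrow> w \<circ> f = f \<circ> w \<Longrightarrow> w \<circ> g = g \<circ> w \<Longrightarrow> w \<circ> esub f g = esub f g \<circ> w"
  unfolding fun_eq_iff comp_def esub_def by (simp add: klinear_diff)

lemma Ekl_comm: "klinear w \<Longrightarrow> w \<circ> xop i = xop i \<circ> w \<Longrightarrow> w \<circ> yop i = yop i \<circ> w \<Longrightarrow> w \<circ> Ekl k l i = Ekl k l i \<circ> w"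
  unfolding Ekl_def
  apply (rule esub_comm_lemma, assumption)
   apply (rule comp_comm_lemma; rule funpow_comm; assumption)
  apply (rule comp_comm_lemma; rule funpow_comm; assumption)
  done

lemma alg_gen_Ekl_comm: "u \<in> alg_gen (UNIV - {i}) \<Longrightarrow> u \<circ> Ekl k l i = Ekl k l i \<circ> u"
  by (rule Ekl_comm) (simp_all add: alg_gen_linear alg_gen_comm_x alg_gen_comm_y)



lemma xpow_suc: "(xop i ^^ k) (xop i p) = xop i ((xop i ^^ k) p)"
  by (simp add: funpow_swap1)

lemma ypow_x: "(yop i ^^ Suc l) (xop i p) = (yop i ^^ l) p"
  by (simp only: funpow_Suc_right comp_apply yx_id')

lemma E1: "xop i \<circ> Ekl k l i = Ekl (Suc k) l i"
  by (rule ext) (simp add: Ekl_def esub_def klinear_diff[OF klinear_xop])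

lemma E2: "yop i \<circ> Ekl (Suc k) l i = Ekl k l i"
  by (rule ext) (simp add: Ekl_def esub_def klinear_diff[OF klinear_yop] yx_id')

lemma E2z: "yop i \<circ> Ekl 0 l i = (\<lambda>p. 0)"
  by (rule ext) (simp add: Ekl_def esub_def klinear_diff[OF klinear_yop] yx_id')

lemma E3: "Ekl k l i \<circ> yop i = Ekl k (Suc l) i"
  by (rule ext) (simp add: Ekl_def esub_def funpow_swap1[symmetric])

lemma E4p: "Ekl k (Suc l) i (xop i q) = Ekl k l i q"
  unfolding Ekl_def esub_def comp_apply
  by (simp only: ypow_x add_Suc)

lemma E4zp: "Ekl k 0 i (xop i q) = 0"
proof -
  have a: "(yop i ^^ (0+1)) (xop i q) = q" using ypow_x[where l=0 and i=i and p=q] by simp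
  show ?thesis unfolding Ekl_def esub_def comp_apply a by (simp add: xpow_suc)
qed

lemma E4: "Ekl k (Suc l) i \<circ> xop i = Ekl k l i"
  by (rule ext) (simp add: E4p)

lemma E4z: "Ekl k 0 i \<circ> xop i = (\<lambda>p. 0)"
  by (rule ext) (simp add: E4zp)

lemma E_vanish: "l < m \<Longrightarrow> Ekl k l i ((xop i ^^ m) p) = 0"
proof (induction l arbitrary: m p)
  case 0
  then obtain m' where "m = Suc m'" by (cases m) auto
  then show ?case by (simp add: E4zp)
next
  case (Suc l)
  then obtain m' where m: "m = Suc m'" and "l < m'" by (cases m) auto
  then show ?case using Suc.IH by (simp add: E4p)
qed

lemma espan_left:
  assumes "klinear g" "\<And>f. f \<in> A \<Longrightarrow> g \<circ> f \<in> espan A" "h \<in> espan A"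
  shows "g \<circ> h \<in> espan A"
  using assms(3)
proof (induction rule: espan.induct)
  case span_zero
  have e: "g \<circ> (\<lambda>p. 0) = (\<lambda>p. 0)" using klinear_zero[OF assms(1)] by (simp add: comp_def)
  show ?case by (subst e) (rule espan.span_zero)
next
  case (span_base f) then show ?case using assms(2) by blast
next
  case (span_add f h)
  have e: "g \<circ> eadd f h = eadd (g \<circ> f) (g \<circ> h)"
    by (rule ext) (simp add: eadd_def klinear_add[OF assms(1)])
  show ?case by (subst e) (rule espan.span_add[OF span_add.IH])
next
  case (span_scal f c)
  have e: "g \<circ> escal c f = escal c (g \<circ> f)"
    by (rule ext) (simp add: escal_def klinear_smult[OF assms(1)])
  show ?case by (subst e) (rule espan.span_scal[OF span_scal.IH])
qed

lemma espan_right: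
  assumes "\<And>f. f \<in> A \<Longrightarrow> f \<circ> g \<in> espan A" "h \<in> espan A"
  shows "h \<circ> g \<in> espan A"
  using assms(2)
proof (induction rule: espan.induct)
  case span_zero
  have e: "(\<lambda>p. 0) \<circ> g = (\<lambda>p. 0)" by (simp add: comp_def)
  show ?case by (subst e) (rule espan.span_zero)
next
  case (span_base f) then show ?case using assms(1) by blast
next
  case (span_add f h)
  have e: "eadd f h \<circ> g = eadd (f \<circ> g) (h \<circ> g)"
    by (rule ext) (simp add: eadd_def)
  show ?case by (subst e) (rule espan.span_add[OF span_add.IH])
next
  case (span_scal f c)
  have e: "escal c f \<circ> g = escal c (f \<circ> g)"
    by (rule ext) (simp add: escal_def)
  show ?case by (subst e) (rule espan.span_scal[OF span_scal.IH])
qed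

definition Abase :: "'i \<Rightarrow> ('i, 'k::field) endo set" where
  "Abase i = {Ekl k l i \<circ> u | k l u. u \<in> alg_gen (UNIV - {i})}"

lemma pid_Abase: "pid i = espan (Abase i)"
  unfolding pid_def Abase_def ..

lemma Abase_in: "u \<in> alg_gen (UNIV - {i}) \<Longrightarrow> Ekl k l i \<circ> u \<in> pid i"
  unfolding pid_Abase Abase_def by (rule espan.span_base) blast

lemma pid_zero: "(\<lambda>p. 0) \<in> pid i"
  unfolding pid_Abase by (rule espan.span_zero)

lemma zero_comp: "(\<lambda>p. 0) \<circ> u = (\<lambda>p. 0)"
  by (simp add: comp_def)

lemma Abase_in': "u \<in> alg_gen (UNIV - {i}) \<Longrightarrow> Ekl k l i \<circ> u \<in> espan (Abase i)"
  using Abase_in unfolding pid_Abase .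

lemma gen_left:
  assumes "g = xop j \<or> g = yop j"
  shows "h \<in> pid i \<Longrightarrow> g \<circ> h \<in> pid i"
  unfolding pid_Abase
proof (erule espan_left[rotated 2])
  show "klinear g" using assms by (metis klinear_xop klinear_yop)
  fix f :: "('a, 'b) endo" assume "f \<in> Abase i"
  then obtain k l u where f: "f = Ekl k l i \<circ> u" and u: "u \<in> alg_gen (UNIV - {i})"
    unfolding Abase_def by blast
  show "g \<circ> f \<in> espan (Abase i)"
  proof (cases "j = i")
    case True
    show ?thesis
    proof (cases "g = xop j")
      case True
      then have g: "g = xop i" using \<open>j = i\<close> by simp
      have "g \<circ> f = Ekl (Suc k) l i \<circ> u" unfolding f g comp_assoc[symmetric] E1 ..
      then show ?thesis using Abase_in'[OF u] by simp
    next
      case False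
      then have g: "g = yop i" using assms \<open>j = i\<close> by blast
      show ?thesis
      proof (cases k)
        case 0
        have "g \<circ> f = (\<lambda>p. 0)" unfolding f g 0 comp_assoc[symmetric] E2z zero_comp ..
        then show ?thesis by (simp add: espan.span_zero)
      next
        case (Suc k')
        have "g \<circ> f = Ekl k' l i \<circ> u" unfolding f g Suc comp_assoc[symmetric] E2 ..
        then show ?thesis using Abase_in'[OF u] by simp
      qed
    qed
  next
    case False
    then have gu: "g \<in> alg_gen (UNIV - {i})" using assms by (auto intro: alg_gen.intros)
    have "g \<circ> f = Ekl k l i \<circ> (g \<circ> u)" unfolding f comp_assoc[symmetric] alg_gen_Ekl_comm[OF gu] ..
    then show ?thesis using Abase_in'[OF alg_gen.gen_comp[OF gu u]] by simp
  qed
qed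

lemma pid_add: "f \<in> pid i \<Longrightarrow> g \<in> pid i \<Longrightarrow> eadd f g \<in> pid i"
  unfolding pid_Abase by (rule espan.span_add)

lemma pid_scal: "f \<in> pid i \<Longrightarrow> escal c f \<in> pid i"
  unfolding pid_Abase by (rule espan.span_scal)

lemma pid_left: "g \<in> Sn \<Longrightarrow> h \<in> pid i \<Longrightarrow> g \<circ> h \<in> pid i"
proof (induction g arbitrary: h rule: alg_gen.induct)
  case (gen_x j) then show ?case by (intro gen_left[of _ j]) auto
next
  case (gen_y j) then show ?case by (intro gen_left[of _ j]) auto
next
  case (gen_scal c)
  have "(\<lambda>p. smult_pol c p) \<circ> h = escal c h" by (rule ext) (simp add: escal_def)
  then show ?case using pid_scal[OF gen_scal] by simp
next
  case (gen_add f g)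
  have e: "eadd f g \<circ> h = eadd (f \<circ> h) (g \<circ> h)" by (rule ext) (simp add: eadd_def)
  show ?case by (subst e) (rule pid_add[OF gen_add.IH(1)[OF gen_add.prems] gen_add.IH(2)[OF gen_add.prems]])
next
  case (gen_comp f g)
  then show ?case by (simp add: comp_assoc)
qed

lemma gen_right:
  assumes "g = xop j \<or> g = yop j \<or> g = (\<lambda>p. smult_pol c p)"
  shows "h \<in> pid i \<Longrightarrow> h \<circ> g \<in> pid i"
  unfolding pid_Abase
proof (erule espan_right[rotated])
  fix f :: "('a, 'b) endo" assume "f \<in> Abase i"
  then obtain k l u where f: "f = Ekl k l i \<circ> u" and u: "u \<in> alg_gen (UNIV - {i})"
    unfolding Abase_def by blast
  show "f \<circ> g \<in> espan (Abase i)"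
  proof (cases "j = i \<and> g \<noteq> (\<lambda>p. smult_pol c p)")
    case False
    then have gu: "g \<in> alg_gen (UNIV - {i})" using assms by (auto intro: alg_gen.intros)
    have "f \<circ> g = Ekl k l i \<circ> (u \<circ> g)" unfolding f comp_assoc ..
    then show ?thesis using Abase_in'[OF alg_gen.gen_comp[OF u gu]] by simp
  next
    case True
    then have ji: "j = i" by simp
    show ?thesis
    proof (cases "g = xop j")
      case True
      then have g: "g = xop i" using ji by simp
      have fg: "f \<circ> g = Ekl k l i \<circ> xop i \<circ> u" unfolding f g comp_assoc alg_gen_comm_x[OF u] ..
      show ?thesis
      proof (cases l)
        case 0
        have "f \<circ> g = (\<lambda>p. 0)" unfolding fg 0 E4z zero_comp ..
        then show ?thesis by (simp add: espan.span_zero)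
      next
        case (Suc l')
        have "f \<circ> g = Ekl k l' i \<circ> u" unfolding fg Suc E4 ..
        then show ?thesis using Abase_in'[OF u] by simp
      qed
    next
      case False
      then have g: "g = yop i" using assms True by blast
      have "f \<circ> g = Ekl k (Suc l) i \<circ> u" unfolding f g comp_assoc alg_gen_comm_y[OF u, symmetric]
        unfolding comp_assoc[symmetric] E3 ..
      then show ?thesis using Abase_in'[OF u] by simp
    qed
  qed
qed

lemma pid_right: "g \<in> Sn \<Longrightarrow> h \<in> pid i \<Longrightarrow> h \<circ> g \<in> pid i"
proof (induction g arbitrary: h rule: alg_gen.induct)
  case (gen_x j) then show ?case by (intro gen_right[of _ j]) auto
next
  case (gen_y j) then show ?case by (intro gen_right[of _ j]) auto
next
  case (gen_scal c) then show ?case by (intro gen_right[of _ undefined c]) auto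
next
  case (gen_add f g)
  have e: "h \<circ> eadd f g = eadd (h \<circ> f) (h \<circ> g)"
    by (rule ext) (simp add: eadd_def klinear_add[OF pid_linear[OF gen_add.prems]])
  show ?case by (subst e) (rule pid_add[OF gen_add.IH(1)[OF gen_add.prems] gen_add.IH(2)[OF gen_add.prems]])
next
  case (gen_comp f g)
  show ?case unfolding comp_assoc[symmetric] by (rule gen_comp.IH(2)[OF gen_comp.IH(1)[OF gen_comp.prems]])
qed



lemma smult_neg1: "smult_pol (-1) q = - q"
  by (simp add: smult_conv single_uminus)

lemma comm_in_pid:
  fixes g :: "('i, 'k::field) endo"
  shows "g \<in> Sn \<Longrightarrow> comm (xop i) g \<in> pid i"
proof (induction rule: alg_gen.induct)
  case (gen_x j)
  have "comm (xop i) (xop j) = (\<lambda>p. 0::('i,'k) pol)" by (rule ext) (simp add: comm_def esub_def xop_def mult.left_commute)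
  then show ?case by (simp add: pid_zero)
next
  case (gen_y j)
  show ?case
  proof (cases "j = i")
    case False
    have "comm (xop i) (yop j) = (\<lambda>p. 0::('i,'k) pol)"
      using xy_comm[of i j] False by (simp add: fun_eq_iff comm_def esub_def)
    then show ?thesis by (simp add: pid_zero)
  next
    case True
    have "comm (xop i) (yop j) = escal (-1::'k) (Ekl 0 0 i \<circ> (\<lambda>p. smult_pol 1 p))"
      by (rule ext) (simp add: True comm_def esub_def escal_def Ekl_def smult_one yx_id' smult_neg1)
    moreover have "escal (-1::'k) (Ekl 0 0 i \<circ> (\<lambda>p. smult_pol 1 p)) \<in> pid i"
      by (rule pid_scal, rule Abase_in, rule alg_gen.gen_scal)
    ultimately show ?thesis by simp
  qed
next
  case (gen_scal c)
  have "comm (xop i) (\<lambda>p. smult_pol c p) = (\<lambda>p. 0::('i,'k) pol)"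
    by (rule ext) (simp add: comm_def esub_def klinear_smult[OF klinear_xop])
  then show ?case by (simp add: pid_zero)
next
  case (gen_add f g)
  have e: "comm (xop i) (eadd f g) = eadd (comm (xop i) f) (comm (xop i) g)"
    by (rule ext) (simp add: comm_def esub_def eadd_def klinear_add[OF klinear_xop])
  show ?case by (subst e) (rule pid_add[OF gen_add.IH])
next
  case (gen_comp f g)
  have e: "comm (xop i) (f \<circ> g) = eadd (comm (xop i) f \<circ> g) (f \<circ> comm (xop i) g)"
    by (rule ext) (simp add: comm_def esub_def eadd_def klinear_diff[OF alg_gen_linear[OF gen_comp.hyps(1)]])
  show ?case by (subst e) (rule pid_add[OF pid_right[OF gen_comp.hyps(2) gen_comp.IH(1)] pid_left[OF gen_comp.hyps(1) gen_comp.IH(2)]])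
qed

lemma pid_vanish: "h \<in> pid i \<Longrightarrow> \<exists>L. \<forall>m p. L \<le> m \<longrightarrow> h ((xop i ^^ m) p) = 0"
  unfolding pid_Abase
proof (induction rule: espan.induct)
  case span_zero then show ?case by auto
next
  case (span_base f)
  then obtain k l u where f: "f = Ekl k l i \<circ> u" and u: "u \<in> alg_gen (UNIV - {i})"
    unfolding Abase_def by blast
  have c: "u \<circ> xop i ^^ m = xop i ^^ m \<circ> u" for m
    by (rule funpow_comm) (rule alg_gen_comm_x[OF u, symmetric])
  have "f ((xop i ^^ m) p) = 0" if "Suc l \<le> m" for m p
  proof -
    have "f ((xop i ^^ m) p) = Ekl k l i ((xop i ^^ m) (u p))"
      using fun_cong[OF c[of m], of p] f by simp
    also have "\<dots> = 0" by (rule E_vanish) (use that in simp)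
    finally show ?thesis .
  qed
  then show ?case by blast
next
  case (span_add f g)
  then obtain L1 L2 where "\<forall>m p. L1 \<le> m \<longrightarrow> f ((xop i ^^ m) p) = 0" "\<forall>m p. L2 \<le> m \<longrightarrow> g ((xop i ^^ m) p) = 0"
    by blast
  then have "\<forall>m p. max L1 L2 \<le> m \<longrightarrow> eadd f g ((xop i ^^ m) p) = 0" by (simp add: eadd_def)
  then show ?case by blast
next
  case (span_scal f c)
  then obtain L where "\<forall>m p. L \<le> m \<longrightarrow> f ((xop i ^^ m) p) = 0" by blast
  then have "\<forall>m p. L \<le> m \<longrightarrow> escal c f ((xop i ^^ m) p) = 0" by (simp add: escal_def smult_zero2)
  then show ?case by blast
qed

lemma two_three:
  assumes "comm (xop i) \<phi> \<in> pid i"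
  shows "\<exists>a\<in>pid i. \<exists>b\<in>pid i. xop i \<circ> \<phi> = eadd (\<phi> \<circ> eadd (xop i) a) b"
proof (intro bexI)
  show "xop i \<circ> \<phi> = eadd (\<phi> \<circ> eadd (xop i) (\<lambda>p. 0)) (comm (xop i) \<phi>)"
    by (rule ext) (simp add: eadd_def comm_def esub_def)
qed (simp_all add: pid_zero assms)

lemma xpow_mono: "(xop i ^^ m) (Poly_Mapping.single \<gamma> c) = Poly_Mapping.single (\<gamma> + Poly_Mapping.single i m) c"
proof (induction m)
  case 0 then show ?case by simp
next
  case (Suc m)
  have "\<gamma> + Poly_Mapping.single i m + Poly_Mapping.single i 1 = \<gamma> + Poly_Mapping.single i (Suc m)"
    by (simp add: add.assoc single_add[symmetric])
  then show ?case using Suc by (simp add: xop_mono)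
qed

lemma three_key:
  fixes \<phi> :: "('i, 'k::field) endo"
  assumes "a \<in> pid i" "b \<in> pid i" "xop i \<circ> \<phi> = eadd (\<phi> \<circ> eadd (xop i) a) b"
  shows "\<exists>L. \<forall>\<alpha>. L \<le> Poly_Mapping.lookup \<alpha> i \<longrightarrow>
     \<phi> (Poly_Mapping.single (\<alpha> + Poly_Mapping.single i 1) 1) = xop i (\<phi> (Poly_Mapping.single \<alpha> 1))"
proof -
  obtain La Lb where La: "\<forall>m p. La \<le> m \<longrightarrow> a ((xop i ^^ m) p) = 0"
    and Lb: "\<forall>m p. Lb \<le> m \<longrightarrow> b ((xop i ^^ m) p) = 0"
    using pid_vanish[OF assms(1)] pid_vanish[OF assms(2)] by blast
  define L where "L = max La Lb"
  have "\<phi> (Poly_Mapping.single (\<alpha> + Poly_Mapping.single i 1) 1) = xop i (\<phi> (Poly_Mapping.single \<alpha> 1))"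
    if "L \<le> Poly_Mapping.lookup \<alpha> i" for \<alpha>
  proof -
    define \<gamma> :: "'i \<Rightarrow>\<^sub>0 nat" where "\<gamma> = \<alpha> - Poly_Mapping.single i L"
    have g1: "\<gamma> + Poly_Mapping.single i L = \<alpha>"
      using that unfolding \<gamma>_def
      by (auto simp: poly_mapping_eq_iff fun_eq_iff lookup_add lookup_minus_nat lookup_single when_def)
    have g2: "\<gamma> + Poly_Mapping.single i (Suc L) = \<alpha> + Poly_Mapping.single i 1"
      using g1 by (metis add.assoc single_add Suc_eq_plus1)
    define p :: "('i,'k) pol" where "p = (xop i ^^ L) (Poly_Mapping.single \<gamma> 1)"
    have pa: "p = Poly_Mapping.single \<alpha> 1" unfolding p_def xpow_mono g1 ..
    have xp: "xop i p = Poly_Mapping.single (\<alpha> + Poly_Mapping.single i 1) 1"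
      unfolding p_def using xpow_mono[where i=i and m="Suc L" and \<gamma>=\<gamma> and c=1] g2 by simp
    have "xop i (\<phi> p) = \<phi> (xop i p + a p) + b p"
      using fun_cong[OF assms(3), of p] by (simp add: eadd_def)
    also have "a p = 0" using La unfolding p_def L_def by simp
    also have "b p = 0" using Lb unfolding p_def L_def by simp
    finally show ?thesis using pa xp by simp
  qed
  then show ?thesis by blast
qed



lemma smult_one_fun: "(\<lambda>p. smult_pol 1 p) = (\<lambda>p. p)"
  by (rule ext) (simp add: smult_one)

lemma smult_zero_fun: "(\<lambda>p. smult_pol 0 p) = (\<lambda>p. 0)"
  by (rule ext) (simp add: smult_conv)

lemma id_Sn: "(\<lambda>p. p) \<in> alg_gen J"
  using alg_gen.gen_scal[of 1 J] unfolding smult_one_fun .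

lemma zero_Sn: "(\<lambda>p. 0) \<in> alg_gen J"
  using alg_gen.gen_scal[of 0 J] unfolding smult_zero_fun .

lemma Sn_sum:
  assumes "finite A" "\<And>a. a \<in> A \<Longrightarrow> f a \<in> alg_gen J"
  shows "(\<lambda>p. \<Sum>a\<in>A. f a p) \<in> alg_gen J"
  using assms
proof (induction A rule: finite_induct)
  case empty then show ?case by (simp add: zero_Sn)
next
  case (insert a A)
  have e: "(\<lambda>p. \<Sum>a\<in>insert a A. f a p) = eadd (f a) (\<lambda>p. \<Sum>a\<in>A. f a p)"
    using insert.hyps by (simp add: eadd_def)
  show ?case by (subst e) (rule alg_gen.gen_add; use insert in auto)
qed

lemma Sn_esub: "f \<in> alg_gen J \<Longrightarrow> g \<in> alg_gen J \<Longrightarrow> esub f g \<in> alg_gen J"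
proof -
  assume f: "f \<in> alg_gen J" and g: "g \<in> alg_gen J"
  have e: "esub f g = eadd f ((\<lambda>p. smult_pol (-1) p) \<circ> g)"
    by (rule ext) (simp add: esub_def eadd_def smult_neg1)
  show ?thesis by (subst e) (intro alg_gen.intros f g)
qed

lemma Sn_funpow: "f \<in> alg_gen J \<Longrightarrow> f ^^ n \<in> alg_gen J"
proof (induction n)
  case 0
  have "f ^^ 0 = (\<lambda>p. p)" by (simp add: id_def)
  then show ?case using id_Sn by metis
next
  case (Suc n) show ?case unfolding funpow.simps(2) by (rule alg_gen.gen_comp[OF Suc.prems Suc.IH[OF Suc.prems]])
qed

lemma Ekl_Sn: "Ekl k l i \<in> Sn"
  unfolding Ekl_def by (intro Sn_esub alg_gen.gen_comp Sn_funpow alg_gen.intros) auto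

lemma ypow_mono: "(yop i ^^ m) (Poly_Mapping.single \<gamma> c) =
   (if m \<le> Poly_Mapping.lookup \<gamma> i then Poly_Mapping.single (\<gamma> - Poly_Mapping.single i m) c else 0)"
proof (induction m)
  case 0 then show ?case by simp
next
  case (Suc m)
  show ?case
  proof (cases "m \<le> Poly_Mapping.lookup \<gamma> i")
    case True
    have e: "\<gamma> - Poly_Mapping.single i m - Poly_Mapping.single i 1 = \<gamma> - Poly_Mapping.single i (Suc m)"
      by (auto simp: poly_mapping_eq_iff fun_eq_iff lookup_minus_nat lookup_single when_def)
    show ?thesis using Suc True
      by (simp add: yop_mono lookup_minus_nat e[simplified])
  next
    case False
    then show ?thesis using Suc by (simp add: klinear_zero[OF klinear_yop])
  qed
qed

lemma sum_lookup_single: "sum (Poly_Mapping.lookup (Poly_Mapping.single (i::'i::finite) (Suc 0))) UNIV = Suc 0"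
proof -
  have "Poly_Mapping.lookup (Poly_Mapping.single i (Suc 0)) = (\<lambda>k. if k = i then Suc 0 else 0)"
    by (rule ext) (simp add: lookup_single when_def)
  then show ?thesis by simp
qed

lemma pm_induct:
  fixes \<alpha> :: "'i::finite \<Rightarrow>\<^sub>0 nat"
  assumes "P 0" "\<And>\<alpha> i. P \<alpha> \<Longrightarrow> P (\<alpha> + Poly_Mapping.single i 1)"
  shows "P \<alpha>"
proof -
  have "\<forall>\<alpha>::'i \<Rightarrow>\<^sub>0 nat. sum (Poly_Mapping.lookup \<alpha>) UNIV = n \<longrightarrow> P \<alpha>" for n
  proof (induction n)
    case 0
    show ?case
    proof (intro allI impI)
      fix \<alpha> :: "'i \<Rightarrow>\<^sub>0 nat" assume "sum (Poly_Mapping.lookup \<alpha>) UNIV = 0"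
      then have "\<alpha> = 0" by (auto intro!: poly_mapping_eqI)
      then show "P \<alpha>" using assms(1) by simp
    qed
  next
    case (Suc n)
    show ?case
    proof (intro allI impI)
      fix \<alpha> :: "'i \<Rightarrow>\<^sub>0 nat" assume s: "sum (Poly_Mapping.lookup \<alpha>) UNIV = Suc n"
      then obtain i where i: "Poly_Mapping.lookup \<alpha> i > 0"
        by (metis gr0I sum.neutral zero_neq_numeral Zero_not_Suc)
      define \<alpha>' where "\<alpha>' = \<alpha> - Poly_Mapping.single i 1"
      have a: "\<alpha> = \<alpha>' + Poly_Mapping.single i 1"
        using i unfolding \<alpha>'_def
        by (auto simp: poly_mapping_eq_iff fun_eq_iff lookup_add lookup_minus_nat lookup_single when_def)
      have "sum (Poly_Mapping.lookup \<alpha>) UNIV = sum (Poly_Mapping.lookup \<alpha>') UNIV + 1"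
        by (subst a) (simp add: lookup_add sum.distrib sum_lookup_single)
      then have "sum (Poly_Mapping.lookup \<alpha>') UNIV = n" using s by simp
      then have "P \<alpha>'" using Suc.IH by blast
      then show "P \<alpha>" using a assms(2) by metis
    qed
  qed
  then show ?thesis by blast
qed

lemma mono_Sn: "(\<lambda>p. Poly_Mapping.single \<alpha> (1::'k::field) * p) \<in> (Sn :: ('i::finite, 'k) endo set)"
proof (induction \<alpha> rule: pm_induct)
  case 1
  show ?case using id_Sn by simp
next
  case (2 \<alpha> i)
  have e: "(\<lambda>p. Poly_Mapping.single (\<alpha> + Poly_Mapping.single i 1) (1::'k) * p) = xop i \<circ> (\<lambda>p. Poly_Mapping.single \<alpha> 1 * p)"
    by (rule ext) (simp add: xop_def mult.assoc[symmetric] mult_single add.commute)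
  show ?case by (subst e) (rule alg_gen.gen_comp[OF alg_gen.gen_x 2], simp)
qed

lemma mult_Sn: "(\<lambda>p. q * p) \<in> (Sn :: ('i::finite, 'k::field) endo set)"
proof -
  have e: "(\<lambda>p. q * p) = (\<lambda>p. \<Sum>\<alpha>\<in>Poly_Mapping.keys q. ((\<lambda>p. smult_pol (Poly_Mapping.lookup q \<alpha>) p) \<circ> (\<lambda>p. Poly_Mapping.single \<alpha> 1 * p)) p)"
  proof (rule ext)
    fix p
    have "q * p = (\<Sum>\<alpha>\<in>Poly_Mapping.keys q. Poly_Mapping.single \<alpha> (Poly_Mapping.lookup q \<alpha>)) * p"
      by (subst pol_expand[of q]) simp
    also have "\<dots> = (\<Sum>\<alpha>\<in>Poly_Mapping.keys q. ((\<lambda>p. smult_pol (Poly_Mapping.lookup q \<alpha>) p) \<circ> (\<lambda>p. Poly_Mapping.single \<alpha> 1 * p)) p)"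
      by (simp add: sum_distrib_right smult_conv mult.assoc[symmetric] mult_single)
    finally show "q * p = \<dots>" .
  qed
  show ?thesis by (subst e) (rule Sn_sum, simp, rule alg_gen.gen_comp[OF alg_gen.gen_scal mono_Sn])
qed



lemma xy_mono: "0 < Poly_Mapping.lookup \<delta> i \<Longrightarrow> xop i (yop i (Poly_Mapping.single \<delta> c)) = Poly_Mapping.single \<delta> c"
proof -
  assume a: "0 < Poly_Mapping.lookup \<delta> i"
  have e: "\<delta> - Poly_Mapping.single i 1 + Poly_Mapping.single i 1 = \<delta>"
    using a by (auto simp: poly_mapping_eq_iff fun_eq_iff lookup_add lookup_minus_nat lookup_single when_def)
  show ?thesis using a by (simp add: yop_mono xop_mono e[simplified])
qed

lemma t_exists:
  assumes "Poly_Mapping.lookup \<beta> i \<le> N"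
  shows "\<exists>t\<in>(Sn :: ('i, 'k::field) endo set). \<forall>\<gamma>. t (Poly_Mapping.single \<gamma> 1) =
     (if min (Poly_Mapping.lookup \<gamma> i) N = Poly_Mapping.lookup \<beta> i
      then Poly_Mapping.single (\<gamma> - Poly_Mapping.single i (Poly_Mapping.lookup \<beta> i)) 1 else 0)"
proof (cases "Poly_Mapping.lookup \<beta> i < N")
  case True
  define l where "l = Poly_Mapping.lookup \<beta> i"
  have "Ekl 0 l i (Poly_Mapping.single \<gamma> (1::'k)) =
     (if min (Poly_Mapping.lookup \<gamma> i) N = l then Poly_Mapping.single (\<gamma> - Poly_Mapping.single i l) 1 else 0)" for \<gamma>
  proof -
    have "Ekl 0 l i (Poly_Mapping.single \<gamma> (1::'k)) = (yop i ^^ l) (Poly_Mapping.single \<gamma> 1) - xop i ((yop i ^^ Suc l) (Poly_Mapping.single \<gamma> 1))"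
      unfolding Ekl_def esub_def comp_apply by simp
    also have "\<dots> = (if Poly_Mapping.lookup \<gamma> i = l then Poly_Mapping.single (\<gamma> - Poly_Mapping.single i l) 1 else 0)"
    proof (cases "Poly_Mapping.lookup \<gamma> i" l rule: linorder_cases)
      case less then show ?thesis by (simp add: ypow_mono klinear_zero[OF klinear_xop] klinear_zero[OF klinear_yop])
    next
      case equal then show ?thesis by (simp add: ypow_mono yop_mono lookup_minus_nat klinear_zero[OF klinear_xop])
    next
      case greater
      have p: "0 < Poly_Mapping.lookup (\<gamma> - Poly_Mapping.single i l) i"
        using greater by (simp add: lookup_minus_nat)
      have y1: "(yop i ^^ l) (Poly_Mapping.single \<gamma> (1::'k)) = Poly_Mapping.single (\<gamma> - Poly_Mapping.single i l) 1"
        using greater by (subst ypow_mono) simp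
      have y2: "(yop i ^^ Suc l) (Poly_Mapping.single \<gamma> (1::'k)) = yop i (Poly_Mapping.single (\<gamma> - Poly_Mapping.single i l) 1)"
        by (simp only: funpow.simps(2) comp_apply y1)
      show ?thesis using greater by (simp only: y1 y2 xy_mono[OF p] diff_self if_not_P)
    qed
    also have "\<dots> = (if min (Poly_Mapping.lookup \<gamma> i) N = l then Poly_Mapping.single (\<gamma> - Poly_Mapping.single i l) 1 else 0)"
      using True unfolding l_def by (cases "Poly_Mapping.lookup \<gamma> i \<le> N") auto
    finally show ?thesis .
  qed
  note E = this
  show ?thesis unfolding l_def[symmetric]
  proof (rule bexI[of _ "Ekl 0 l i"])
    show "Ekl 0 l i \<in> Sn" by (rule Ekl_Sn)
  qed (use E in simp)
next
  case False
  then have b: "Poly_Mapping.lookup \<beta> i = N" using assms by simp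
  have "(yop i ^^ N) (Poly_Mapping.single \<gamma> (1::'k)) =
     (if min (Poly_Mapping.lookup \<gamma> i) N = N then Poly_Mapping.single (\<gamma> - Poly_Mapping.single i N) 1 else 0)" for \<gamma>
    by (simp add: ypow_mono min_def)
  note E = this
  show ?thesis unfolding b
  proof (rule bexI[of _ "yop i ^^ N"])
    show "yop i ^^ N \<in> Sn" by (rule Sn_funpow[OF alg_gen.gen_y]) simp
  qed (use E in simp)
qed

definition restr :: "'i set \<Rightarrow> ('i::finite \<Rightarrow>\<^sub>0 nat) \<Rightarrow> 'i \<Rightarrow>\<^sub>0 nat" where
  "restr I \<beta> = Abs_poly_mapping (\<lambda>i. if i \<in> I then Poly_Mapping.lookup \<beta> i else 0)"

lemma lookup_restr: "Poly_Mapping.lookup (restr I \<beta>) i = (if i \<in> I then Poly_Mapping.lookup \<beta> i else 0)"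
  unfolding restr_def by simp

lemma T_exists:
  assumes "finite I" "\<forall>i. Poly_Mapping.lookup \<beta> i \<le> N"
  shows "\<exists>T\<in>(Sn :: ('i::finite, 'k::field) endo set). \<forall>\<alpha>. T (Poly_Mapping.single \<alpha> 1) =
     (if (\<forall>i\<in>I. min (Poly_Mapping.lookup \<alpha> i) N = Poly_Mapping.lookup \<beta> i)
      then Poly_Mapping.single (\<alpha> - restr I \<beta>) 1 else 0)"
  using assms(1)
proof (induction I rule: finite_induct)
  case empty
  have "restr {} \<beta> = 0" by (rule poly_mapping_eqI) (simp add: lookup_restr)
  then show ?case using id_Sn by (intro bexI[of _ "\<lambda>p. p"]) auto
next
  case (insert i I)
  obtain T where T: "T \<in> Sn" "\<forall>\<alpha>. T (Poly_Mapping.single \<alpha> (1::'k)) =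
     (if (\<forall>i\<in>I. min (Poly_Mapping.lookup \<alpha> i) N = Poly_Mapping.lookup \<beta> i)
      then Poly_Mapping.single (\<alpha> - restr I \<beta>) 1 else 0)" using insert.IH by blast
  obtain t where t: "t \<in> (Sn :: ('i, 'k) endo set)" "\<forall>\<gamma>. t (Poly_Mapping.single \<gamma> 1) =
     (if min (Poly_Mapping.lookup \<gamma> i) N = Poly_Mapping.lookup \<beta> i
      then Poly_Mapping.single (\<gamma> - Poly_Mapping.single i (Poly_Mapping.lookup \<beta> i)) 1 else 0)"
    using t_exists[of \<beta> i N] assms(2) by blast
  have "(t \<circ> T) (Poly_Mapping.single \<alpha> 1) =
     (if (\<forall>j\<in>insert i I. min (Poly_Mapping.lookup \<alpha> j) N = Poly_Mapping.lookup \<beta> j)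
      then Poly_Mapping.single (\<alpha> - restr (insert i I) \<beta>) 1 else 0)" for \<alpha>
  proof (cases "\<forall>i\<in>I. min (Poly_Mapping.lookup \<alpha> i) N = Poly_Mapping.lookup \<beta> i")
    case True
    have l: "Poly_Mapping.lookup (\<alpha> - restr I \<beta>) i = Poly_Mapping.lookup \<alpha> i"
      using insert.hyps by (simp add: lookup_minus_nat lookup_restr)
    have e: "\<alpha> - restr I \<beta> - Poly_Mapping.single i (Poly_Mapping.lookup \<beta> i) = \<alpha> - restr (insert i I) \<beta>"
      using insert.hyps
      by (auto simp: poly_mapping_eq_iff fun_eq_iff lookup_minus_nat lookup_restr lookup_single when_def)
    show ?thesis using True T(2) t(2) by (simp add: l e)
  next
    case False
    have T0: "T (Poly_Mapping.single \<alpha> 1) = 0" using T(2)[rule_format, of \<alpha>] by (simp only: if_not_P[OF False])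
    have c: "\<not> (\<forall>j\<in>insert i I. min (Poly_Mapping.lookup \<alpha> j) N = Poly_Mapping.lookup \<beta> j)" using False by auto
    show ?thesis by (simp only: comp_apply T0 if_not_P[OF c] klinear_zero[OF alg_gen_linear[OF t(1)]])
  qed
  note E = this
  show ?case
  proof (rule bexI[of _ "t \<circ> T"])
    show "t \<circ> T \<in> Sn" by (rule alg_gen.gen_comp[OF t(1) T(1)])
  qed (use E in simp)
qed



lemma three_one:
  fixes \<phi> :: "('i::finite, 'k::field) endo"
  assumes lin: "klinear \<phi>"
    and key: "\<And>i \<alpha>. N \<le> Poly_Mapping.lookup \<alpha> i \<Longrightarrow>
       \<phi> (Poly_Mapping.single (\<alpha> + Poly_Mapping.single i 1) 1) = xop i (\<phi> (Poly_Mapping.single \<alpha> 1))"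
  shows "\<phi> \<in> Sn"
proof -
  have shift: "\<forall>\<gamma>. (\<forall>i. 0 < Poly_Mapping.lookup \<delta> i \<longrightarrow> N \<le> Poly_Mapping.lookup \<gamma> i) \<longrightarrow>
      \<phi> (Poly_Mapping.single (\<gamma> + \<delta>) 1) = Poly_Mapping.single \<delta> 1 * \<phi> (Poly_Mapping.single \<gamma> 1)" for \<delta>
  proof (induction \<delta> rule: pm_induct)
    case 1 show ?case by simp
  next
    case (2 \<delta> i)
    show ?case
    proof (intro allI impI)
      fix \<gamma> :: "'i \<Rightarrow>\<^sub>0 nat"
      assume c: "\<forall>j. 0 < Poly_Mapping.lookup (\<delta> + Poly_Mapping.single i 1) j \<longrightarrow> N \<le> Poly_Mapping.lookup \<gamma> j"
      have c': "\<forall>j. 0 < Poly_Mapping.lookup \<delta> j \<longrightarrow> N \<le> Poly_Mapping.lookup \<gamma> j" using c by (simp add: lookup_add)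
      have gi: "N \<le> Poly_Mapping.lookup (\<gamma> + \<delta>) i" using c[rule_format, of i] by (simp add: lookup_add)
      have "\<phi> (Poly_Mapping.single (\<gamma> + (\<delta> + Poly_Mapping.single i 1)) 1) = \<phi> (Poly_Mapping.single ((\<gamma> + \<delta>) + Poly_Mapping.single i 1) 1)"
        by (simp add: add.assoc)
      also have "\<dots> = xop i (\<phi> (Poly_Mapping.single (\<gamma> + \<delta>) 1))" by (rule key[OF gi])
      also have "\<dots> = xop i (Poly_Mapping.single \<delta> 1 * \<phi> (Poly_Mapping.single \<gamma> 1))" using 2 c' by simp
      also have "\<dots> = Poly_Mapping.single (\<delta> + Poly_Mapping.single i 1) 1 * \<phi> (Poly_Mapping.single \<gamma> 1)"
        by (simp add: xop_def mult.assoc[symmetric] mult_single add.commute)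
      finally show "\<phi> (Poly_Mapping.single (\<gamma> + (\<delta> + Poly_Mapping.single i 1)) 1) =
          Poly_Mapping.single (\<delta> + Poly_Mapping.single i 1) 1 * \<phi> (Poly_Mapping.single \<gamma> 1)" .
    qed
  qed
  define cap where "cap \<alpha> = Abs_poly_mapping (\<lambda>i. min (Poly_Mapping.lookup \<alpha> i) N)" for \<alpha> :: "'i \<Rightarrow>\<^sub>0 nat"
  have lcap: "Poly_Mapping.lookup (cap \<alpha>) i = min (Poly_Mapping.lookup \<alpha> i) N" for \<alpha> i
    unfolding cap_def by simp
  have phi_mono: "\<phi> (Poly_Mapping.single \<alpha> 1) = Poly_Mapping.single (\<alpha> - cap \<alpha>) 1 * \<phi> (Poly_Mapping.single (cap \<alpha>) 1)" for \<alpha>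
  proof -
    have e: "cap \<alpha> + (\<alpha> - cap \<alpha>) = \<alpha>" by (rule poly_mapping_eqI) (simp add: lookup_add lookup_minus_nat lcap)
    have c: "\<forall>i. 0 < Poly_Mapping.lookup (\<alpha> - cap \<alpha>) i \<longrightarrow> N \<le> Poly_Mapping.lookup (cap \<alpha>) i"
      by (simp add: lookup_minus_nat lcap)
    have "\<phi> (Poly_Mapping.single (cap \<alpha> + (\<alpha> - cap \<alpha>)) 1) = Poly_Mapping.single (\<alpha> - cap \<alpha>) 1 * \<phi> (Poly_Mapping.single (cap \<alpha>) 1)"
      using shift[of "\<alpha> - cap \<alpha>"] c by blast
    then show ?thesis unfolding e .
  qed
  define B where "B = {\<beta> :: 'i \<Rightarrow>\<^sub>0 nat. \<forall>i. Poly_Mapping.lookup \<beta> i \<le> N}"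
  have finB: "finite B"
  proof -
    have "B \<subseteq> Abs_poly_mapping ` (PiE UNIV (\<lambda>_. {..N}))"
    proof
      fix \<beta> assume "\<beta> \<in> B"
      then have "Poly_Mapping.lookup \<beta> \<in> PiE UNIV (\<lambda>_. {..N})" unfolding B_def by (auto simp: PiE_UNIV_domain)
      moreover have "\<beta> = Abs_poly_mapping (Poly_Mapping.lookup \<beta>)" by (simp add: lookup_inverse)
      ultimately show "\<beta> \<in> Abs_poly_mapping ` (PiE UNIV (\<lambda>_. {..N}))" by blast
    qed
    moreover have "finite (PiE UNIV (\<lambda>_::'i. {..N}))" by (rule finite_PiE) auto
    ultimately show ?thesis by (meson finite_imageI finite_subset)
  qed
  have capB: "cap \<alpha> \<in> B" for \<alpha> unfolding B_def by (simp add: lcap)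
  have "\<forall>\<beta>\<in>B. \<exists>T. T \<in> (Sn :: ('i,'k) endo set) \<and> (\<forall>\<alpha>. T (Poly_Mapping.single \<alpha> 1) =
        (if cap \<alpha> = \<beta> then Poly_Mapping.single (\<alpha> - \<beta>) 1 else 0))"
  proof
    fix \<beta> assume "\<beta> \<in> B"
    then have bN: "\<forall>i. Poly_Mapping.lookup \<beta> i \<le> N" unfolding B_def by simp
    obtain T where T: "T \<in> (Sn :: ('i,'k) endo set)" "\<forall>\<alpha>. T (Poly_Mapping.single \<alpha> 1) =
        (if (\<forall>i\<in>UNIV. min (Poly_Mapping.lookup \<alpha> i) N = Poly_Mapping.lookup \<beta> i)
         then Poly_Mapping.single (\<alpha> - restr UNIV \<beta>) 1 else 0)"
      using T_exists[OF finite_UNIV bN] by blast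
    have r: "restr UNIV \<beta> = \<beta>" by (rule poly_mapping_eqI) (simp add: lookup_restr)
    have c: "(\<forall>i. min (Poly_Mapping.lookup \<alpha> i) N = Poly_Mapping.lookup \<beta> i) = (cap \<alpha> = \<beta>)" for \<alpha>
      by (auto simp: poly_mapping_eq_iff fun_eq_iff lcap)
    show "\<exists>T. T \<in> (Sn :: ('i,'k) endo set) \<and> (\<forall>\<alpha>. T (Poly_Mapping.single \<alpha> 1) =
        (if cap \<alpha> = \<beta> then Poly_Mapping.single (\<alpha> - \<beta>) 1 else 0))"
      by (rule exI[of _ T], rule conjI[OF T(1)]) (use T(2) in \<open>simp add: r c\<close>)
  qed
  from bchoice[OF this] obtain Tf where Tf: "\<forall>\<beta>\<in>B. Tf \<beta> \<in> (Sn :: ('i,'k) endo set) \<and> (\<forall>\<alpha>. Tf \<beta> (Poly_Mapping.single \<alpha> 1) =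
        (if cap \<alpha> = \<beta> then Poly_Mapping.single (\<alpha> - \<beta>) 1 else 0))"
    by (elim exE) (erule that)
  have Tf1: "\<And>\<beta>. \<beta> \<in> B \<Longrightarrow> Tf \<beta> \<in> Sn" using Tf by simp
  have Tf2: "\<And>\<beta> \<alpha>. \<beta> \<in> B \<Longrightarrow> Tf \<beta> (Poly_Mapping.single \<alpha> 1) =
        (if cap \<alpha> = \<beta> then Poly_Mapping.single (\<alpha> - \<beta>) 1 else 0)" using Tf by simp
  define R where "R = (\<lambda>p. \<Sum>\<beta>\<in>B. \<phi> (Poly_Mapping.single \<beta> 1) * Tf \<beta> p)"
  have RSn: "R \<in> Sn" unfolding R_def
  proof (rule Sn_sum[OF finB])
    fix \<beta> assume b: "\<beta> \<in> B"
    have e: "(\<lambda>p. \<phi> (Poly_Mapping.single \<beta> 1) * Tf \<beta> p) = (\<lambda>p. \<phi> (Poly_Mapping.single \<beta> 1) * p) \<circ> Tf \<beta>"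
      by (simp add: comp_def)
    show "(\<lambda>p. \<phi> (Poly_Mapping.single \<beta> 1) * Tf \<beta> p) \<in> Sn"
      by (subst e) (rule alg_gen.gen_comp[OF mult_Sn Tf1[OF b]])
  qed
  have "\<phi> = R"
  proof (rule linear_ext[OF lin alg_gen_linear[OF RSn]])
    fix \<alpha>
    have "R (Poly_Mapping.single \<alpha> 1) = (\<Sum>\<beta>\<in>B. if cap \<alpha> = \<beta> then \<phi> (Poly_Mapping.single \<beta> 1) * Poly_Mapping.single (\<alpha> - \<beta>) 1 else 0)"
      unfolding R_def by (intro sum.cong refl) (simp add: Tf2)
    also have "\<dots> = \<phi> (Poly_Mapping.single (cap \<alpha>) 1) * Poly_Mapping.single (\<alpha> - cap \<alpha>) 1"
      using finB capB by simp
    also have "\<dots> = \<phi> (Poly_Mapping.single \<alpha> 1)" using phi_mono[of \<alpha>] by (simp only: mult.commute)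
    finally show "\<phi> (Poly_Mapping.single \<alpha> 1) = R (Poly_Mapping.single \<alpha> 1)" by simp
  qed
  then show ?thesis using RSn by simp
qed

theorem theorem6p2:
  fixes \<phi> :: "('i::finite, 'k::field_char_0) endo"
  assumes "klinear \<phi>"
  shows "(\<phi> \<in> Sn \<longleftrightarrow> (\<forall>i. comm (xop i) \<phi> \<in> pid i))
       \<and> ((\<forall>i. comm (xop i) \<phi> \<in> pid i) \<longleftrightarrow>
          (\<forall>i. \<exists>a\<in>pid i. \<exists>b\<in>pid i. xop i \<circ> \<phi> = eadd (\<phi> \<circ> eadd (xop i) a) b))"
proof -
  have A: "\<forall>i. comm (xop i) \<phi> \<in> pid i" if "\<phi> \<in> Sn" by (intro allI comm_in_pid[OF that])
  have B: "\<forall>i. \<exists>a\<in>pid i. \<exists>b\<in>pid i. xop i \<circ> \<phi> = eadd (\<phi> \<circ> eadd (xop i) a) b"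
    if "\<forall>i. comm (xop i) \<phi> \<in> pid i" by (intro allI two_three[OF spec[OF that]])
  have C: "\<phi> \<in> Sn" if h: "\<forall>i. \<exists>a\<in>pid i. \<exists>b\<in>pid i. xop i \<circ> \<phi> = eadd (\<phi> \<circ> eadd (xop i) a) b"
  proof -
    have "\<forall>i. \<exists>L. \<forall>\<alpha>. L \<le> Poly_Mapping.lookup \<alpha> i \<longrightarrow>
       \<phi> (Poly_Mapping.single (\<alpha> + Poly_Mapping.single i 1) 1) = xop i (\<phi> (Poly_Mapping.single \<alpha> 1))"
    proof
      fix i
      obtain a b where "a \<in> pid i" "b \<in> pid i" "xop i \<circ> \<phi> = eadd (\<phi> \<circ> eadd (xop i) a) b"
        using h[rule_format, of i] by blast
      then show "\<exists>L. \<forall>\<alpha>. L \<le> Poly_Mapping.lookup \<alpha> i \<longrightarrow>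
       \<phi> (Poly_Mapping.single (\<alpha> + Poly_Mapping.single i 1) 1) = xop i (\<phi> (Poly_Mapping.single \<alpha> 1))" by (rule three_key)
    qed
    from choice[OF this] obtain Lf where Lf: "\<forall>i. \<forall>\<alpha>. Lf i \<le> Poly_Mapping.lookup \<alpha> i \<longrightarrow>
       \<phi> (Poly_Mapping.single (\<alpha> + Poly_Mapping.single i 1) 1) = xop i (\<phi> (Poly_Mapping.single \<alpha> 1))"
      by (elim exE) (erule that)
    define N where "N = Max (range Lf)"
    have LN: "Lf i \<le> N" for i :: 'i unfolding N_def by (rule Max_ge) auto
    show ?thesis
    proof (rule three_one[OF assms, of N])
      fix i :: 'i and \<alpha> :: "'i \<Rightarrow>\<^sub>0 nat" assume "N \<le> Poly_Mapping.lookup \<alpha> i"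
      then have Li: "Lf i \<le> Poly_Mapping.lookup \<alpha> i" using LN[of i] by linarith
      show "\<phi> (Poly_Mapping.single (\<alpha> + Poly_Mapping.single i 1) 1) = xop i (\<phi> (Poly_Mapping.single \<alpha> 1))"
        by (rule Lf[rule_format, OF Li])
    qed
  qed
  show ?thesis
  proof (intro conjI iffI)
    assume "\<phi> \<in> Sn" then show "\<forall>i. comm (xop i) \<phi> \<in> pid i" by (rule A)
  next
    assume "\<forall>i. comm (xop i) \<phi> \<in> pid i" then show "\<phi> \<in> Sn" by (rule C[OF B])
  next
    assume "\<forall>i. comm (xop i) \<phi> \<in> pid i"
    then show "\<forall>i. \<exists>a\<in>pid i. \<exists>b\<in>pid i. xop i \<circ> \<phi> = eadd (\<phi> \<circ> eadd (xop i) a) b" by (rule B)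
  next
    assume "\<forall>i. \<exists>a\<in>pid i. \<exists>b\<in>pid i. xop i \<circ> \<phi> = eadd (\<phi> \<circ> eadd (xop i) a) b"
    then show "\<forall>i. comm (xop i) \<phi> \<in> pid i" by (rule A[OF C])
  qed
qed


end
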